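(* Let $\varphi$ be a primitive $k$-uniform morphism on $\{0,1\}$ with $\varphi(0)$ beginning with $0$, and let $a=|\varphi(0)|_0$, $b=|\varphi(0)|_1$, $c=|\varphi(1)|_0$, $d=|\varphi(1)|_1$ (so $a+b=c+d=k$). Let $w=\lim_{n\to\infty}\varphi^n(0)$ be the infinite fixed point of $\varphi$ starting with $0$. For a finite or infinite binary word $u$, let $g_u$ be its graphic with respect to the vectors $\mathbf v_0=(1,-b)$, $\mathbf v_1=(1,c)$. Then: 1. If $g_{\varphi(0)}(x)=0$ for some real $x$ with $0<x\le k$, then $w$ is weak abelian periodic. 2. If $g_{\varphi(0)}(k)\ge -b$, then $w$ is weak abelian periodic. 3. Suppose that $g_{\varphi(0)}(x)\neq 0$ for all real $x\in(0,k]$ and $g_{\varphi(0)}(k)<-b$. Put $\Delta=g_{\varphi(0)}(k)$, $A=\max\{g_{\varphi(0)}(i): 1\le i\le k,\ \varphi(0)_i=1\}$ and $t=\max\{g_{\varphi(1)}(i): 1\le i\le k,\ \varphi(1)_i=1\}$, where $u_i$ denotes the $i$-th letter of $u$. Then $w$ is weak abelian periodic if and only if $\Delta\cdot\frac{A-c}{-b}+t\ge A$.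
   Context: A morphism $\varphi$ on $\{0,1\}^*$ is $k$-uniform if $|\varphi(0)|=|\varphi(1)|=k$, and primitive if for some $m$ both $\varphi^m(0)$ and $\varphi^m(1)$ contain both letters. $|u|_a$ is the number of occurrences of letter $a$ in $u$. The graphic $g_u$ of a binary word $u=u_1u_2\cdots$ with respect to vectors $\mathbf v_0=(1,-b)$, $\mathbf v_1=(1,c)$ is the piecewise linear function on $[0,|u|]$ (or $[0,\infty)$) with $g_u(0)=0$, $g_u(n)=c\,|u_1\cdots u_n|_1-b\,|u_1\cdots u_n|_0$ for integers $n$, and linear between consecutive integers. For a finite word $v$, $\rho_a(v)=|v|_a/|v|$ for nonempty $v$. An infinite binary word $w$ is weak abelian periodic if $w=v_0v_1v_2\cdots$ with $v_0$ finite and $v_1,v_2,\dots$ nonempty finite words such that $\rho_a(v_i)=\rho_a(v_j)$ for $a\in\{0,1\}$ and all $i,j\ge1$. *)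

theory Defs
  imports Complex_Main
begin

definition binword :: "nat list \<Rightarrow> bool" where
  "binword u \<longleftrightarrow> set u \<subseteq> {0, 1}"

definition cnt :: "nat \<Rightarrow> nat list \<Rightarrow> nat" where
  "cnt a u = length (filter (\<lambda>x. x = a) u)"

definition morph :: "nat list \<Rightarrow> nat list \<Rightarrow> nat list \<Rightarrow> nat list" where
  "morph f0 f1 u = concat (map (\<lambda>x. if x = 0 then f0 else f1) u)"

definition uniform_morph :: "nat \<Rightarrow> nat list \<Rightarrow> nat list \<Rightarrow> bool" where
  "uniform_morph k f0 f1 \<longleftrightarrow> length f0 = k \<and> length f1 = k"

definition primitive_morph :: "nat list \<Rightarrow> nat list \<Rightarrow> bool" where
  "primitive_morph f0 f1 \<longleftrightarrow>
     (\<exists>m. {0, 1} \<subseteq> set ((morph f0 f1 ^^ m) [0]) \<and> {0, 1} \<subseteq> set ((morph f0 f1 ^^ m) [1]))"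

definition graph_pt :: "real \<Rightarrow> real \<Rightarrow> nat list \<Rightarrow> nat \<Rightarrow> real" where
  "graph_pt b c u n = c * real (cnt 1 (take n u)) - b * real (cnt 0 (take n u))"

definition graphic :: "real \<Rightarrow> real \<Rightarrow> nat list \<Rightarrow> real \<Rightarrow> real" where
  "graphic b c u x = (let n = nat \<lfloor>x\<rfloor> in
      graph_pt b c u n + (x - real n) * (graph_pt b c u (Suc n) - graph_pt b c u n))"

definition rho :: "nat \<Rightarrow> nat list \<Rightarrow> real" where
  "rho a v = real (cnt a v) / real (length v)"

text \<open>w = v_0 v_1 v_2 ... with v_i = w[p(i-1) .. p i) for i >= 1, v_0 = w[0 .. p 0);
  strict monotonicity of p makes v_1, v_2, ... nonempty.\<close>
definition weak_abelian_periodic :: "(nat \<Rightarrow> nat) \<Rightarrow> bool" where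
  "weak_abelian_periodic w \<longleftrightarrow>
     (\<exists>p :: nat \<Rightarrow> nat. strict_mono p \<and>
        (\<forall>i j a. a \<in> {0, 1} \<longrightarrow>
           rho a (map w [p i..<p (Suc i)]) = rho a (map w [p j..<p (Suc j)])))"

end

theory Submission imports Defs "HOL-Library.Infinite_Set" begin


lemma morph_Nil[simp]: "morph f0 f1 [] = []" by (simp add: morph_def)
lemma morph_Cons[simp]: "morph f0 f1 (x#u) = (if x = 0 then f0 else f1) @ morph f0 f1 u"
  by (simp add: morph_def)

lemma morph_length: "length f0 = k \<Longrightarrow> length f1 = k \<Longrightarrow> length (morph f0 f1 u) = k * length u"
  by (induction u) auto

lemma morph_set: "set (morph f0 f1 u) \<subseteq> set f0 \<union> set f1"
  by (induction u) auto

lemma morph_nth: "length f0 = k \<Longrightarrow> length f1 = k \<Longrightarrow> i < length u \<Longrightarrow> j < k \<Longrightarrow>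
   morph f0 f1 u ! (k*i + j) = (if u!i = 0 then f0 else f1) ! j"
proof (induction u arbitrary: i)
  case Nil then show ?case by simp
next
  case (Cons x u)
  show ?case
  proof (cases i)
    case 0 then show ?thesis using Cons.prems by (simp add: nth_append)
  next
    case (Suc i')
    have "k * i + j = k + (k*i' + j)" using Suc by simp
    moreover have "i' < length u" using Cons.prems Suc by simp
    ultimately show ?thesis using Cons.IH[of i'] Cons.prems Suc by (simp add: nth_append)
  qed
qed

lemma morph_single: "set (if x = 0 then f0 else f1) \<subseteq> {x} \<Longrightarrow> set u \<subseteq> {x} \<Longrightarrow> set (morph f0 f1 u) \<subseteq> {x}"
  by (induction u) auto

lemma iter_single: "set (if x = 0 then f0 else f1) \<subseteq> {x} \<Longrightarrow> set ((morph f0 f1 ^^ m) [x]) \<subseteq> {x}"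
  by (induction m) (auto dest: morph_single)

lemma cnt_Cons[simp]: "cnt a (x#u) = (if x = a then Suc (cnt a u) else cnt a u)"
  by (simp add: cnt_def)
lemma cnt_Nil[simp]: "cnt a [] = 0" by (simp add: cnt_def)

lemma cnt01: "set u \<subseteq> {0,1} \<Longrightarrow> cnt 0 u + cnt 1 u = length u"
  by (induction u) auto




locale fw =
  fixes k :: nat and f0 f1 :: "nat list" and w :: "nat \<Rightarrow> nat"
  assumes bin0: "binword f0" and bin1: "binword f1"
    and unif: "uniform_morph k f0 f1"
    and prim: "primitive_morph f0 f1"
    and start: "f0 \<noteq> [] \<and> hd f0 = 0"
    and fix_w: "\<forall>n i. i < length ((morph f0 f1 ^^ n) [0]) \<longrightarrow> w i = (morph f0 f1 ^^ n) [0] ! i"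
begin

definition fx :: "nat \<Rightarrow> nat list" where "fx x = (if x = 0 then f0 else f1)"
definition bi :: int where "bi = int (cnt 1 f0)"
definition ci :: int where "ci = int (cnt 0 f1)"
definition lam :: int where "lam = int (cnt 0 f0) - int (cnt 0 f1)"
definition st :: "nat \<Rightarrow> int" where "st x = (if x = 1 then ci else - bi)"
definition Gi :: "nat \<Rightarrow> int" where "Gi n = (\<Sum>i=0..<n. st (w i))"
definition gf :: "nat \<Rightarrow> nat \<Rightarrow> int" where "gf x j = (\<Sum>i=0..<j. st (fx x ! i))"

lemma len0: "length f0 = k" and len1: "length f1 = k"
  using unif by (auto simp: uniform_morph_def)

lemma P_len: "length ((morph f0 f1 ^^ m) [0]) = k ^ m"
  by (induction m) (auto simp: morph_length[OF len0 len1])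

lemma P_set: "set ((morph f0 f1 ^^ m) [0]) \<subseteq> {0,1}"
proof (induction m)
  case 0 then show ?case by simp
next
  case (Suc m)
  have "set (morph f0 f1 ((morph f0 f1 ^^ m) [0])) \<subseteq> set f0 \<union> set f1" by (rule morph_set)
  then show ?case using bin0 bin1 by (auto simp: binword_def)
qed

lemma b_pos: "bi \<ge> 1"
proof (rule ccontr)
  assume "\<not> bi \<ge> 1"
  then have "cnt 1 f0 = 0" by (simp add: bi_def)
  then have "1 \<notin> set f0" by (auto simp add: cnt_def filter_empty_conv)
  then have "set (if (0::nat) = 0 then f0 else f1) \<subseteq> {0}" using bin0 by (auto simp: binword_def)
  from iter_single[OF this] prim show False by (auto simp: primitive_morph_def)
qed

lemma c_pos: "ci \<ge> 1"
proof (rule ccontr)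
  assume "\<not> ci \<ge> 1"
  then have "cnt 0 f1 = 0" by (simp add: ci_def)
  then have "0 \<notin> set f1" by (auto simp add: cnt_def filter_empty_conv)
  then have "set (if (1::nat) = 0 then f0 else f1) \<subseteq> {1}" using bin1 by (auto simp: binword_def)
  from iter_single[OF this] prim show False by (auto simp: primitive_morph_def)
qed

lemma cnt_f0: "cnt 0 f0 + cnt 1 f0 = k" using cnt01[of f0] bin0 len0 by (simp add: binword_def)
lemma cnt_f1: "cnt 0 f1 + cnt 1 f1 = k" using cnt01[of f1] bin1 len1 by (simp add: binword_def)

lemma f0_0: "f0 ! 0 = 0" using start by (cases f0) auto

lemma k_ge2: "k \<ge> 2"
proof -
  have "cnt 0 f0 \<ge> 1"
    using start by (cases f0) (auto)
  then show ?thesis using b_pos cnt_f0 by (simp add: bi_def)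
qed

lemma lam_lt: "lam \<le> int k - 1"
  using b_pos cnt_f0 by (simp add: lam_def bi_def)

lemma w_P: "i < k ^ m \<Longrightarrow> w i = (morph f0 f1 ^^ m) [0] ! i"
  using fix_w P_len by auto

lemma n_lt_pow: "n < k ^ n"
proof -
  have "n < 2 ^ n" by (rule less_exp)
  also have "2 ^ n \<le> k ^ n" using k_ge2 by (simp add: power_mono)
  finally show ?thesis .
qed

lemma w0: "w 0 = 0" using w_P[of 0 0] by simp

lemma wbin: "w n = 0 \<or> w n = 1"
proof -
  have "w n = (morph f0 f1 ^^ n) [0] ! n" using w_P n_lt_pow by blast
  moreover have "(morph f0 f1 ^^ n) [0] ! n \<in> set ((morph f0 f1 ^^ n) [0])"
    using n_lt_pow P_len by simp
  ultimately show ?thesis using P_set by auto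
qed

lemma wblock: "j < k \<Longrightarrow> w (k*n + j) = fx (w n) ! j"
proof -
  assume j: "j < k"
  let ?u = "(morph f0 f1 ^^ n) [0]"
  have n: "n < length ?u" using n_lt_pow P_len by simp
  have "k*n + j < k * (n+1)" using j by simp
  also have "\<dots> \<le> k * k^n" using n P_len by (intro mult_le_mono2) simp
  finally have "k*n+j < k^(Suc n)" by simp
  then have "w (k*n+j) = (morph f0 f1 ^^ Suc n) [0] ! (k*n+j)" by (rule w_P)
  also have "\<dots> = morph f0 f1 ?u ! (k*n+j)" by simp
  also have "\<dots> = (if ?u!n = 0 then f0 else f1) ! j" by (rule morph_nth[OF len0 len1 n j])
  also have "?u ! n = w n" using w_P[OF n_lt_pow[of n]] by simp
  finally show ?thesis by (simp add: fx_def)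
qed

lemma wpre: "j < k \<Longrightarrow> w j = f0 ! j"
  using wblock[of j 0] w0 by (simp add: fx_def)

end



context fw begin

lemma Gi_Suc: "Gi (Suc n) = Gi n + st (w n)" by (simp add: Gi_def)
lemma Gi_0[simp]: "Gi 0 = 0" by (simp add: Gi_def)

lemma Gi_add: "Gi (m + j) = Gi m + (\<Sum>i=0..<j. st (w (m+i)))"
  by (induction j) (auto simp: Gi_Suc)

lemma gf_Suc: "gf x (Suc j) = gf x j + st (fx x ! j)" by (simp add: gf_def)
lemma gf_0[simp]: "gf x 0 = 0" by (simp add: gf_def)

lemma sumlist_st: "set u \<subseteq> {0,1} \<Longrightarrow> sum_list (map st u) = ci * int (cnt 1 u) - bi * int (cnt 0 u)"
  by (induction u) (auto simp: st_def algebra_simps)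

lemma sum_take: "j \<le> length u \<Longrightarrow> (\<Sum>i=0..<j. st (u!i)) = sum_list (map st (take j u))"
  by (induction j) (auto simp: take_Suc_conv_app_nth)

lemma fx_bin: "set (fx x) \<subseteq> {0,1}" using bin0 bin1 by (auto simp: fx_def binword_def)
lemma fx_len: "length (fx x) = k" using len0 len1 by (simp add: fx_def)

lemma gf_list: "j \<le> k \<Longrightarrow> gf x j = ci * int (cnt 1 (take j (fx x))) - bi * int (cnt 0 (take j (fx x)))"
proof -
  assume j: "j \<le> k"
  have "gf x j = sum_list (map st (take j (fx x)))" unfolding gf_def
    by (rule sum_take) (simp add: fx_len j)
  also have "\<dots> = ci * int (cnt 1 (take j (fx x))) - bi * int (cnt 0 (take j (fx x)))"
    by (rule sumlist_st) (meson fx_bin order_trans set_take_subset)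
  finally show ?thesis .
qed

lemma gf_k: "x = 0 \<or> x = 1 \<Longrightarrow> gf x k = lam * st x"
proof -
  assume x: "x = 0 \<or> x = 1"
  have e: "gf x k = ci * int (cnt 1 (fx x)) - bi * int (cnt 0 (fx x))"
    using gf_list[of k x] fx_len by simp
  have a: "int (cnt 0 f0) + bi = int k" using cnt_f0 unfolding bi_def by linarith
  have d: "ci + int (cnt 1 f1) = int k" using cnt_f1 unfolding ci_def by linarith
  show ?thesis
  proof (cases "x = 0")
    case True
    then have "gf x k = ci * bi - bi * int (cnt 0 f0)" using e by (simp add: fx_def bi_def)
    also have "\<dots> = lam * (- bi)" by (simp add: lam_def ci_def algebra_simps)
    finally show ?thesis using True by (simp add: st_def)
  next
    case False
    then have x1: "x = 1" using x by simp
    then have "gf x k = ci * int (cnt 1 f1) - bi * ci" using e by (simp add: fx_def ci_def)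
    also have "int (cnt 1 f1) - bi = lam" using a d by (simp add: lam_def ci_def)
    then have "ci * int (cnt 1 f1) - bi * ci = lam * ci" by (metis mult.commute right_diff_distrib)
    finally show ?thesis using x1 by (simp add: st_def)
  qed
qed

lemma Gi_kn: "Gi (k*n) = lam * Gi n"
proof (induction n)
  case 0 then show ?case by simp
next
  case (Suc n)
  have "Gi (k * Suc n) = Gi (k*n + k)" by (simp add: algebra_simps)
  also have "\<dots> = Gi (k*n) + (\<Sum>i=0..<k. st (w (k*n+i)))" by (rule Gi_add)
  also have "(\<Sum>i=0..<k. st (w (k*n+i))) = gf (w n) k"
    unfolding gf_def by (rule sum.cong) (auto simp: wblock)
  also have "\<dots> = lam * st (w n)" using gf_k wbin by blast
  finally show ?case using Suc by (simp add: Gi_Suc algebra_simps)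
qed

lemma Gi_block: "j \<le> k \<Longrightarrow> Gi (k*n + j) = lam * Gi n + gf (w n) j"
proof -
  assume j: "j \<le> k"
  have "Gi (k*n + j) = Gi (k*n) + (\<Sum>i=0..<j. st (w (k*n+i)))" by (rule Gi_add)
  also have "(\<Sum>i=0..<j. st (w (k*n+i))) = gf (w n) j"
    unfolding gf_def using j by (intro sum.cong) (auto simp: wblock)
  finally show ?thesis by (simp add: Gi_kn)
qed

lemma Gi_pre: "j \<le> k \<Longrightarrow> Gi j = gf 0 j"
  using Gi_block[of j 0] w0 by simp

lemma Gi_pow: "Gi (k^m * n) = lam^m * Gi n"
  by (induction m) (auto simp: Gi_kn mult.assoc)

lemma Gi_1: "Gi 1 = - bi" using w0 by (simp add: Gi_def st_def)

lemma Gi_powk: "Gi (k^m) = - bi * lam^m" using Gi_pow[of m 1] Gi_1 by simp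

lemma graph_pt_gf: "j \<le> k \<Longrightarrow> graph_pt (real (cnt 1 f0)) (real (cnt 0 f1)) (fx x) j = of_int (gf x j)"
  by (simp add: graph_pt_def gf_list bi_def ci_def)

lemma graphic_nat: "graphic b c u (real n) = graph_pt b c u n"
  by (simp add: graphic_def)

end



context fw begin

lemma wset: "set (map w xs) \<subseteq> {0,1}"
proof -
  have h: "w x \<in> {0,1}" for x using wbin[of x] by simp
  show ?thesis unfolding set_map image_subset_iff using h by blast
qed

lemma blk_sum: "p \<le> q \<Longrightarrow> Gi q - Gi p = ci * int (cnt 1 (map w [p..<q])) - bi * int (cnt 0 (map w [p..<q]))"
proof -
  assume pq: "p \<le> q"
  have "Gi q = Gi p + (\<Sum>i=p..<q. st (w i))" unfolding Gi_def
    using sum.atLeastLessThan_concat[of 0 p q "\<lambda>i. st (w i)"] pq by simp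
  moreover have "(\<Sum>i=p..<q. st (w i)) = sum_list (map st (map w [p..<q]))"
    using sum_set_upt_conv_sum_list_nat[of "\<lambda>i. st (w i)" p q] by (simp add: o_def)
  moreover have "sum_list (map st (map w [p..<q])) = ci * int (cnt 1 (map w [p..<q])) - bi * int (cnt 0 (map w [p..<q]))"
    by (rule sumlist_st[OF wset])
  ultimately show ?thesis by simp
qed

lemma blk_len: "cnt 0 (map w [p..<q]) + cnt 1 (map w [p..<q]) = q - p"
  using cnt01[OF wset[of "[p..<q]"]] by simp

lemma rho_eq: "p < q \<Longrightarrow> Gi p = Gi q \<Longrightarrow>
   rho 1 (map w [p..<q]) = real_of_int bi / (bi + ci) \<and> rho 0 (map w [p..<q]) = real_of_int ci / (bi + ci)"
proof -
  assume pq: "p < q" and G: "Gi p = Gi q"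
  define n0 where "n0 = real (cnt 0 (map w [p..<q]))"
  define n1 where "n1 = real (cnt 1 (map w [p..<q]))"
  have L: "n0 + n1 = real (q - p)" using blk_len[of p q] unfolding n0_def n1_def
    by (metis of_nat_add)
  have Lp: "real (q - p) > 0" using pq by simp
  have ei: "ci * int (cnt 1 (map w [p..<q])) = bi * int (cnt 0 (map w [p..<q]))"
    using blk_sum[of p q] pq G by simp
  have e: "real_of_int ci * n1 = real_of_int bi * n0"
    unfolding n0_def n1_def using arg_cong[OF ei, of real_of_int] by simp
  have bc: "real_of_int bi + real_of_int ci > 0" using b_pos c_pos by simp
  have r1: "rho 1 (map w [p..<q]) = n1 / real (q - p)" unfolding rho_def n1_def by simp
  have r0: "rho 0 (map w [p..<q]) = n0 / real (q - p)" unfolding rho_def n0_def by simp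
  have nz: "real (q - p) \<noteq> 0" "real_of_int bi + real_of_int ci \<noteq> 0" using Lp bc by auto
  have "n1 * (real_of_int bi + real_of_int ci) = real_of_int bi * real (q - p)"
    using e by (simp add: L[symmetric] algebra_simps)
  moreover have "n0 * (real_of_int bi + real_of_int ci) = real_of_int ci * real (q - p)"
    using e by (simp add: L[symmetric] algebra_simps)
  ultimately show ?thesis unfolding r1 r0 using nz by (simp add: frac_eq_eq)
qed

lemma rep_wap: "(\<forall>N. \<exists>n\<ge>N. Gi n = v) \<Longrightarrow> weak_abelian_periodic w"
proof -
  assume H: "\<forall>N. \<exists>n\<ge>N. Gi n = v"
  define S where "S = {n. Gi n = v}"
  have inf: "infinite S" unfolding S_def infinite_nat_iff_unbounded_le using H by auto
  define p where "p = enumerate S"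
  have sm: "strict_mono p" unfolding p_def using strict_mono_enumerate[OF inf] .
  have pv: "Gi (p i) = v" for i unfolding p_def using enumerate_in_set[OF inf] S_def by auto
  have blk: "rho 1 (map w [p i..<p (Suc i)]) = real_of_int bi / (bi + ci) \<and>
             rho 0 (map w [p i..<p (Suc i)]) = real_of_int ci / (bi + ci)" for i
    using rho_eq[of "p i" "p (Suc i)"] sm pv by (simp add: strict_mono_def)
  show ?thesis unfolding weak_abelian_periodic_def
    apply (rule exI[of _ p])
    using sm blk by auto
qed

lemma down_cross: "n1 \<le> n2 \<Longrightarrow> Gi n1 \<ge> L \<Longrightarrow> Gi n2 < L \<Longrightarrow>
   \<exists>n. n1 \<le> n \<and> Gi n \<ge> L \<and> Gi (Suc n) < L"
proof (induction n2)
  case 0 then show ?case by simp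
next
  case (Suc m)
  show ?case
  proof (cases "Gi m \<ge> L")
    case True then show ?thesis using Suc.prems by (metis le_SucE not_le)
  next
    case False
    then have "n1 \<le> m" using Suc.prems by (cases "n1 = Suc m") auto
    then show ?thesis using Suc.IH Suc.prems(2) False by simp
  qed
qed

lemma cross: "(\<forall>N. \<exists>n\<ge>N. Gi n \<ge> L) \<Longrightarrow> (\<forall>N. \<exists>n\<ge>N. Gi n < L) \<Longrightarrow> weak_abelian_periodic w"
proof -
  assume H1: "\<forall>N. \<exists>n\<ge>N. Gi n \<ge> L" and H2: "\<forall>N. \<exists>n\<ge>N. Gi n < L"
  have C: "\<exists>n\<ge>N. L \<le> Gi n \<and> Gi n < L + bi" for N
  proof -
    obtain n1 where n1: "n1 \<ge> N" "Gi n1 \<ge> L" using H1 by blast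
    obtain n2 where n2: "n2 \<ge> n1" "Gi n2 < L" using H2 by blast
    obtain n where n: "n1 \<le> n" "Gi n \<ge> L" "Gi (Suc n) < L" using down_cross[OF n2(1) n1(2) n2(2)] by blast
    have "st (w n) = - bi" using n c_pos by (auto simp: Gi_Suc st_def split: if_splits)
    then show ?thesis using n n1 by (intro exI[of _ n]) (auto simp: Gi_Suc)
  qed
  show ?thesis
  proof (rule ccontr)
    assume nw: "\<not> weak_abelian_periodic w"
    have "\<forall>v. \<exists>N. \<forall>n\<ge>N. Gi n \<noteq> v" using rep_wap nw by blast
    then obtain Nf where Nf: "\<And>v n. n \<ge> Nf v \<Longrightarrow> Gi n \<noteq> v" by metis
    define N where "N = Max (Nf ` {L..<L+bi})"
    obtain n where n: "n \<ge> N" "L \<le> Gi n" "Gi n < L + bi" using C by blast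
    have "Nf (Gi n) \<le> N" unfolding N_def using n by (intro Max_ge) auto
    then show False using Nf[of "Gi n" n] n by simp
  qed
qed

end



context fw begin

definition Kb :: int where "Kb = int k * (bi + ci)"

lemma st_abs: "\<bar>st x\<bar> \<le> bi + ci" using b_pos c_pos by (simp add: st_def)

lemma gf_abs: "j \<le> k \<Longrightarrow> \<bar>gf x j\<bar> \<le> Kb"
proof -
  assume j: "j \<le> k"
  have "\<bar>gf x j\<bar> \<le> (\<Sum>i=0..<j. \<bar>st (fx x ! i)\<bar>)" unfolding gf_def by (rule sum_abs)
  also have "\<dots> \<le> of_nat (card {0..<j}) * (bi + ci)" by (rule sum_bounded_above) (rule st_abs)
  also have "\<dots> \<le> int k * (bi + ci)" using j b_pos c_pos by (intro mult_right_mono) auto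
  finally show ?thesis by (simp add: Kb_def)
qed

lemma Kb_nonneg: "Kb \<ge> 0" using b_pos c_pos by (simp add: Kb_def)

lemma Gi_bound: "lam \<ge> 2 \<Longrightarrow> n < k^m \<Longrightarrow> \<bar>Gi n\<bar> \<le> Kb * (lam^m - 1)"
proof (induction m arbitrary: n)
  case 0 then show ?case by simp
next
  case (Suc m)
  define q where "q = n div k"
  define j where "j = n mod k"
  have kpos: "k > 0" using k_ge2 by simp
  have n: "n = k*q + j" unfolding q_def j_def by simp
  have j: "j < k" unfolding j_def using kpos by simp
  have q: "q < k^m" using Suc.prems(2) unfolding q_def
    by (simp add: less_mult_imp_div_less mult.commute)
  have IH: "\<bar>Gi q\<bar> \<le> Kb * (lam^m - 1)" using Suc.IH[OF Suc.prems(1) q] .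
  have "Gi n = lam * Gi q + gf (w q) j" using Gi_block[of j q] j n by simp
  then have "\<bar>Gi n\<bar> \<le> \<bar>lam * Gi q\<bar> + \<bar>gf (w q) j\<bar>" by (simp add: abs_triangle_ineq)
  moreover have "\<bar>lam * Gi q\<bar> = lam * \<bar>Gi q\<bar>" using Suc.prems(1) by (simp add: abs_mult)
  moreover have "\<bar>gf (w q) j\<bar> \<le> Kb" using gf_abs[of j "w q"] j by simp
  ultimately have "\<bar>Gi n\<bar> \<le> lam * \<bar>Gi q\<bar> + Kb" by linarith
  also have "\<dots> \<le> lam * (Kb * (lam^m - 1)) + Kb" using IH Suc.prems(1) by (simp add: mult_left_mono)
  also have "\<dots> \<le> Kb * (lam^Suc m - 1)"
  proof -
    have "lam * (Kb * (lam^m - 1)) + Kb = Kb * (lam^Suc m - 1) + Kb * (2 - lam)" by (simp add: algebra_simps)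
    moreover have "Kb * (2 - lam) \<le> 0" using Kb_nonneg Suc.prems(1) by (simp add: mult_nonneg_nonpos)
    ultimately show ?thesis by simp
  qed
  finally show ?case .
qed

end



context fw begin

lemma lin_p:
  fixes r :: real
  assumes sm: "strict_mono p" and eq: "\<forall>i. rho 1 (map w [p i..<p (Suc i)]) = r"
  shows "real_of_int (Gi (p i)) = Gi (p 0) + ((real_of_int bi + ci) * r - bi) * (real (p i) - real (p 0))"
proof (induction i)
  case 0 then show ?case by simp
next
  case (Suc i)
  let ?u = "map w [p i..<p (Suc i)]"
  have lt: "p i < p (Suc i)" using sm by (simp add: strict_mono_def)
  define n0 where "n0 = real (cnt 0 ?u)"
  define n1 where "n1 = real (cnt 1 ?u)"
  define L where "L = real (p (Suc i)) - real (p i)"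
  have L: "n0 + n1 = L" using blk_len[of "p i" "p (Suc i)"] lt unfolding n0_def n1_def L_def
    by (metis of_nat_add of_nat_diff less_imp_le)
  have Lp: "L > 0" using lt unfolding L_def by simp
  have "r = n1 / L" using eq[rule_format, of i] unfolding rho_def n1_def L_def using lt by (simp add: of_nat_diff)
  then have n1: "n1 = r * L" using Lp by simp
  have "Gi (p (Suc i)) - Gi (p i) = ci * int (cnt 1 ?u) - bi * int (cnt 0 ?u)"
    using blk_sum lt by simp
  then have "real_of_int (Gi (p (Suc i))) - Gi (p i) = ci * n1 - bi * n0" unfolding n0_def n1_def
    by (metis of_int_diff of_int_mult of_int_of_nat_eq)
  also have "\<dots> = ((bi + ci) * r - bi) * L"
  proof -
    have n0: "n0 = L - r * L" using n1 L by simp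
    show ?thesis unfolding n0 n1 by (simp add: algebra_simps)
  qed
  finally show ?case using Suc unfolding L_def by (simp add: algebra_simps)
qed

lemma notwap:
  assumes lam2: "lam \<ge> 2" and div: "\<forall>L. \<exists>N. \<forall>n\<ge>N. Gi n < L"
  shows "\<not> weak_abelian_periodic w"
proof
  assume "weak_abelian_periodic w"
  then obtain p where sm: "strict_mono p" and eqr: "\<forall>i j a. a \<in> {0,1} \<longrightarrow>
           rho a (map w [p i..<p (Suc i)]) = rho a (map w [p j..<p (Suc j)])"
    unfolding weak_abelian_periodic_def by blast
  define r where "r = rho 1 (map w [p 0..<p (Suc 0)])"
  have eq: "\<forall>i. rho 1 (map w [p i..<p (Suc i)]) = r" unfolding r_def using eqr by blast
  define s where "s = (real_of_int bi + ci) * r - bi"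
  have lin: "real_of_int (Gi (p i)) = Gi (p 0) + s * (real (p i) - real (p 0))" for i
    using lin_p[OF sm eq, of i] unfolding s_def by linarith
  have pge: "p i \<ge> i" for i using strict_mono_imp_increasing[OF sm] .
  show False
  proof (cases "s \<ge> 0")
    case True
    obtain N where N: "\<forall>n\<ge>N. Gi n < Gi (p 0)" using div by blast
    have "p N \<ge> p 0" using sm by (simp add: strict_mono_less_eq)
    then have "real_of_int (Gi (p N)) \<ge> Gi (p 0)" using lin[of N] True by simp
    moreover have "Gi (p N) < Gi (p 0)" using N pge by blast
    ultimately show False by simp
  next
    case False
    then have sneg: "-s > 0" by simp
    define C where "C = real_of_int (Gi (p 0)) - s * real (p 0)"
    have linC: "real_of_int (Gi (p i)) = C + s * real (p i)" for i using lin[of i] unfolding C_def by (simp add: algebra_simps)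
    define kr where "kr = real k"
    define lr where "lr = real_of_int lam"
    define Kr where "Kr = real_of_int Kb"
    have kr: "kr \<ge> 2" using k_ge2 unfolding kr_def by simp
    have lr: "lr \<ge> 2" "lr < kr" using lam2 lam_lt unfolding lr_def kr_def by linarith+
    have lim: "(\<lambda>M. Kr * lr * (lr / kr)^M + \<bar>C\<bar> * (1 / kr)^M) \<longlonglongrightarrow> Kr * lr * 0 + \<bar>C\<bar> * 0"
      using lr kr by (intro tendsto_intros LIMSEQ_power_zero) auto
    then have "eventually (\<lambda>M. Kr * lr * (lr / kr)^M + \<bar>C\<bar> * (1 / kr)^M < -s) sequentially"
      using sneg by (intro order_tendstoD(2)) auto
    then obtain M0 where M0: "\<And>M. M \<ge> M0 \<Longrightarrow> Kr * lr * (lr / kr)^M + \<bar>C\<bar> * (1 / kr)^M < -s"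
      unfolding eventually_sequentially by blast
    define n where "n = p (k^M0)"
    have n1: "n \<ge> k^M0" using pge unfolding n_def by simp
    have "k^M0 \<ge> 1" using k_ge2 by simp
    then obtain M where M: "k^M \<le> n" "n < k^(M+1)" using ex_power_ivl1[OF k_ge2, of n] n1 by auto
    have MM0: "M \<ge> M0"
    proof (rule ccontr)
      assume "\<not> M \<ge> M0"
      then have "M + 1 \<le> M0" by simp
      then have "k^(M+1) \<le> k^M0" using k_ge2 by (intro power_increasing) auto
      then show False using M n1 by simp
    qed
    have bd: "\<bar>Gi n\<bar> \<le> Kb * (lam^(M+1) - 1)" using Gi_bound[OF lam2 M(2)] .
    have "real_of_int (Gi n) \<ge> - (Kr * lr^(M+1))"
    proof -
      have "-(Kb * lam^(M+1)) \<le> Gi n" using bd Kb_nonneg by (simp add: algebra_simps abs_le_iff)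
      then show ?thesis unfolding Kr_def lr_def
        by (metis of_int_le_iff of_int_minus of_int_mult of_int_power)
    qed
    moreover have "real_of_int (Gi n) \<le> C + s * (kr^M)"
    proof -
      have "real n \<ge> kr^M" using M(1) unfolding kr_def by (metis of_nat_le_iff of_nat_power)
      then have "s * real n \<le> s * kr^M" using False by (intro mult_left_mono_neg) auto
      then show ?thesis using linC[of "k^M0"] unfolding n_def by simp
    qed
    ultimately have ineq: "-s * kr^M \<le> \<bar>C\<bar> + Kr * lr * lr^M" by (simp add: algebra_simps)
    have kM: "kr^M > 0" using kr by simp
    have "(Kr * lr * (lr / kr)^M + \<bar>C\<bar> * (1 / kr)^M) * kr^M = \<bar>C\<bar> + Kr * lr * lr^M"
      using kM kr by (simp add: power_divide field_simps)
    then have "-s * kr^M \<le> (Kr * lr * (lr / kr)^M + \<bar>C\<bar> * (1 / kr)^M) * kr^M" using ineq by simp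
    then have "-s * kr^M \<le> (Kr * lr * (lr / kr)^M + \<bar>C\<bar> * (1 / kr)^M) * kr^M" by simp
    then have "-s \<le> Kr * lr * (lr / kr)^M + \<bar>C\<bar> * (1 / kr)^M" using kM by (rule mult_right_le_imp_le)
    then show False using M0[OF MM0] by simp
  qed
qed

end



context fw begin

definition Nt :: "nat \<Rightarrow> nat" where "Nt L = ((\<lambda>x. k*x+1)^^L) 1"

lemma Nt_0: "Nt 0 = 1" by (simp add: Nt_def)
lemma Nt_Suc: "Nt (Suc L) = k * Nt L + 1" by (simp add: Nt_def)
lemma Nt_pos: "Nt L \<ge> 1" by (induction L) (auto simp: Nt_0 Nt_Suc)

lemma Gi_Suc_prev: "n \<ge> 1 \<Longrightarrow> Gi n = Gi (n-1) + st (w (n-1))"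
  using Gi_Suc[of "n-1"] by simp

lemma div_inf:
  assumes lam2: "lam \<ge> 2"
    and g0neg: "\<And>j. 1 \<le> j \<Longrightarrow> j \<le> k \<Longrightarrow> gf 0 j \<le> -1"
    and g0A: "\<And>j. 1 \<le> j \<Longrightarrow> j \<le> k \<Longrightarrow> f0!(j-1) = 1 \<Longrightarrow> gf 0 j \<le> Ai"
    and Aneg: "Ai \<le> -1"
    and g1t: "\<And>j. j \<le> k \<Longrightarrow> gf 1 j \<le> ti"
    and ncrit: "lam*(Ai - ci) + ti < Ai"
  shows "\<forall>L. \<exists>N. \<forall>n\<ge>N. Gi n < L"
proof -
  define \<delta> where "\<delta> = min lam (Ai - (lam*(Ai-ci) + ti))"
  have d1: "\<delta> \<ge> 1" "\<delta> \<le> lam" "\<delta> \<le> Ai - (lam*(Ai-ci) + ti)" using lam2 ncrit unfolding \<delta>_def by auto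
  define P where "P L n \<longleftrightarrow> Gi n \<le> -1 - int L * \<delta> \<and> (w (n-1) = 1 \<longrightarrow> Gi n \<le> Ai - int L * \<delta>)" for L n
  have mono: "P L n" if "P (Suc L) n" for L n
  proof -
    have "int L * \<delta> \<le> int (Suc L) * \<delta>" using d1 by (simp add: mult_right_mono)
    then show ?thesis using that unfolding P_def by auto
  qed
  have step: "P (Suc L) n" if n: "n = k*m + j" "1 \<le> j" "j \<le> k" "m \<ge> 1"
      and IH1: "P L m" and IH2: "P L (m+1)" for L n m j
  proof -
    have Gn: "Gi n = lam * Gi m + gf (w m) j" using Gi_block[OF n(3)] n(1) by simp
    have wn: "w (n-1) = fx (w m) ! (j-1)"
    proof -
      have "n - 1 = k*m + (j-1)" using n by simp
      then show ?thesis using wblock[of "j-1" m] n by simp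
    qed
    have X: "int L * \<delta> \<ge> 0" using d1 by simp
    have LD: "lam * (int L * \<delta>) \<ge> int L * \<delta>" using mult_right_mono[OF _ X, of 1 lam] lam2 by simp
    show ?thesis
    proof (cases "w m = 0")
      case True
      have a: "Gi m \<le> -1 - int L * \<delta>" using IH1 unfolding P_def by simp
      have b: "lam * Gi m \<le> lam * (-1 - int L * \<delta>)" using a lam2 by (simp add: mult_left_mono)
      have c0: "lam * (-1 - int L * \<delta>) = - lam - lam * (int L * \<delta>)" by (simp add: algebra_simps)
      have c: "lam * (-1 - int L * \<delta>) \<le> - \<delta> - int L * \<delta>" using LD d1 c0 by linarith
      have g1: "gf (w m) j \<le> -1" using g0neg[OF n(2,3)] True by simp
      have g2: "w (n-1) = 1 \<Longrightarrow> gf (w m) j \<le> Ai" using g0A[OF n(2,3)] True wn by (simp add: fx_def)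
      have r1: "Gi n \<le> -1 - int (Suc L) * \<delta>" using Gn b c g1 by (simp add: algebra_simps)
      have r2: "w (n-1) = 1 \<Longrightarrow> Gi n \<le> Ai - int (Suc L) * \<delta>"
      proof -
        assume "w (n-1) = 1"
        then have "gf (w m) j \<le> Ai" by (rule g2)
        then show ?thesis using Gn b c by (simp add: algebra_simps)
      qed
      show ?thesis unfolding P_def using r1 r2 by blast
    next
      case False
      then have w1: "w m = 1" using wbin by metis
      have a: "Gi (m+1) \<le> Ai - int L * \<delta>" using IH2 w1 unfolding P_def by simp
      have Gm: "Gi m = Gi (m+1) - ci" using Gi_Suc[of m] w1 by (simp add: st_def)
      have b: "lam * Gi m \<le> lam * (Ai - int L * \<delta> - ci)" using a lam2 Gm by (simp add: mult_left_mono)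
      have c: "lam * (Ai - int L * \<delta> - ci) = lam * (Ai - ci) - lam * (int L * \<delta>)" by (simp add: algebra_simps)
      have g: "gf (w m) j \<le> ti" using g1t[OF n(3)] w1 by simp
      have "Gi n \<le> Ai - \<delta> - int L * \<delta>" using Gn b c g LD d1 by linarith
      then show ?thesis unfolding P_def using Aneg by (simp add: algebra_simps)
    qed
  qed
  have main: "\<forall>L. Nt L \<le> n \<longrightarrow> P L n" for n
  proof (induction n rule: less_induct)
    case (less n)
    show ?case
    proof (intro allI impI)
      fix L assume NL: "Nt L \<le> n"
      have n1: "n \<ge> 1" using NL Nt_pos[of L] by linarith
      show "P L n"
      proof (cases "n \<le> k")
        case True
        have L0: "L = 0"
        proof (rule ccontr)
          assume "L \<noteq> 0"
          then obtain L' where "L = Suc L'" by (cases L) auto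
          then have "Nt L \<ge> k + 1" using Nt_pos[of L'] by (simp add: Nt_Suc)
          then show False using NL True by simp
        qed
        have Gn: "Gi n = gf 0 n" using Gi_pre True by simp
        have "w (n-1) = f0 ! (n-1)" using wpre True n1 by simp
        then show ?thesis unfolding P_def L0 using Gn g0neg[OF n1 True] g0A[OF n1 True] by simp
      next
        case False
        define m where "m = (n-1) div k"
        define j where "j = (n-1) mod k + 1"
        have kpos: "k > 0" using k_ge2 by simp
        have nmj: "n = k*m + j" unfolding m_def j_def using n1 by simp
        have j: "1 \<le> j" "j \<le> k" unfolding j_def using kpos by (auto simp: Suc_leI)
        have m1: "m \<ge> 1" unfolding m_def using False kpos by (simp add: Suc_le_eq div_greater_zero_iff)
        have mlt: "m < n" "m + 1 < n"
        proof -
          have "k*m \<ge> 2*m" using k_ge2 by simp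
          then show "m < n" "m + 1 < n" using nmj j m1 by linarith+
        qed
        define L0 where "L0 = L - 1"
        have NL0: "Nt L0 \<le> m"
        proof (cases L)
          case 0 then show ?thesis using m1 by (simp add: L0_def Nt_0)
        next
          case (Suc L')
          then have "k * Nt L' + 1 \<le> n" using NL by (simp add: Nt_Suc)
          then have "k * Nt L' \<le> n - 1" by simp
          then have "Nt L' \<le> (n-1) div k" using kpos by (simp add: less_eq_div_iff_mult_less_eq mult.commute)
          then show ?thesis unfolding L0_def m_def using Suc by simp
        qed
        have IH1: "P L0 m" using less.IH[OF mlt(1)] NL0 by blast
        have IH2: "P L0 (m+1)" using less.IH[OF mlt(2)] NL0 by simp
        have S: "P (Suc L0) n" using step[OF nmj j m1 IH1 IH2] .
        show ?thesis
        proof (cases L)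
          case 0 then show ?thesis using mono[OF S] L0_def by simp
        next
          case (Suc L') then show ?thesis using S L0_def by simp
        qed
      qed
    qed
  qed
  show ?thesis
  proof
    fix L :: int
    define Lv where "Lv = nat (- L)"
    have "-1 - int Lv * \<delta> < L"
    proof -
      have "int Lv * \<delta> \<ge> int Lv" using d1 by (simp add: mult_le_cancel_left1)
      then show ?thesis unfolding Lv_def by linarith
    qed
    then show "\<exists>N. \<forall>n\<ge>N. Gi n < L" using main unfolding P_def
      by (intro exI[of _ "Nt Lv"]) force
  qed
qed

end



context fw begin

lemma lam0_wap: "lam = 0 \<Longrightarrow> weak_abelian_periodic w"
  apply (rule rep_wap[of 0])
  apply (intro allI)
  subgoal for N using Gi_powk[of "Suc N"] n_lt_pow[of "Suc N"] by (intro exI[of _ "k^Suc N"]) simp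
  done

lemma lam1_wap: "lam = 1 \<Longrightarrow> weak_abelian_periodic w"
  apply (rule rep_wap[of "- bi"])
  apply (intro allI)
  subgoal for N using Gi_powk[of N] n_lt_pow[of N] by (intro exI[of _ "k^N"]) simp
  done

lemma lamneg_wap: "lam < 0 \<Longrightarrow> weak_abelian_periodic w"
proof -
  assume l: "lam < 0"
  have sq: "lam^2 > 0" using l by simp
  show ?thesis
  proof (rule cross[of 0])
    show "\<forall>N. \<exists>n\<ge>N. 0 \<le> Gi n"
    proof
      fix N
      have "lam^(2*N+1) = lam * (lam^2)^N" by (simp add: power_mult power_add)
      moreover have "(lam^2)^N > 0" using sq by simp
      ultimately have "lam^(2*N+1) < 0" using l by (simp add: mult_neg_pos)
      then have "bi * lam^(2*N+1) \<le> 0" using b_pos by (intro mult_nonneg_nonpos) auto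
      then have "Gi (k^(2*N+1)) \<ge> 0" using Gi_powk[of "2*N+1"] by linarith
      moreover have "k^(2*N+1) \<ge> N" using n_lt_pow[of "2*N+1"] by simp
      ultimately show "\<exists>n\<ge>N. 0 \<le> Gi n" by blast
    qed
    show "\<forall>N. \<exists>n\<ge>N. Gi n < 0"
    proof
      fix N
      have "lam^(2*N) > 0" using sq by (simp add: power_mult)
      then have "Gi (k^(2*N)) < 0" using Gi_powk[of "2*N"] b_pos by (simp add: mult_pos_pos)
      moreover have "k^(2*N) \<ge> N" using n_lt_pow[of "2*N"] by simp
      ultimately show "\<exists>n\<ge>N. Gi n < 0" by blast
    qed
  qed
qed

lemma neg_often: "lam \<ge> 1 \<Longrightarrow> \<exists>n\<ge>N. Gi n < 0"
proof -
  assume "lam \<ge> 1"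
  then have "lam^N > 0" by simp
  then have "Gi (k^N) < 0" using Gi_powk[of N] b_pos by (simp add: mult_pos_pos)
  moreover have "k^N \<ge> N" using n_lt_pow[of N] by simp
  ultimately show ?thesis by blast
qed

lemma lampos_wap: "lam \<ge> 1 \<Longrightarrow> 1 \<le> i \<Longrightarrow> Gi i \<ge> 0 \<Longrightarrow> weak_abelian_periodic w"
proof -
  assume l: "lam \<ge> 1" and i: "1 \<le> i" and G: "Gi i \<ge> 0"
  show ?thesis
  proof (rule cross[of 0])
    show "\<forall>N. \<exists>n\<ge>N. Gi n < 0" using neg_often l by blast
    show "\<forall>N. \<exists>n\<ge>N. 0 \<le> Gi n"
    proof
      fix N
      have "Gi (k^N * i) \<ge> 0" using Gi_pow[of N i] l G by simp
      moreover have "k^N * i \<ge> N" using n_lt_pow[of N] i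
        by (metis le_trans less_imp_le mult.right_neutral mult_le_mono2)
      ultimately show "\<exists>n\<ge>N. 0 \<le> Gi n" by blast
    qed
  qed
qed

lemma neg_often2: "lam \<ge> 2 \<Longrightarrow> \<exists>n\<ge>N. Gi n < L"
proof -
  assume l: "lam \<ge> 2"
  define m where "m = N + nat (- L) + 1"
  have "int m < 2^m" by (metis of_nat_less_numeral_power_cancel_iff less_exp)
  also have "(2::int)^m \<le> lam^m" using l by (intro power_mono) auto
  also have "lam^m \<le> bi * lam^m" using b_pos l by (simp add: mult_le_cancel_right1)
  finally have "Gi (k^m) < - int m" using Gi_powk[of m] by simp
  moreover have "- int m < L" unfolding m_def by linarith
  moreover have "k^m \<ge> N" using n_lt_pow[of m] unfolding m_def by simp
  ultimately show ?thesis by (intro exI[of _ "k^m"]) simp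
qed

lemma crit_wap:
  assumes lam2: "lam \<ge> 2"
    and i0: "1 \<le> i0" "i0 \<le> k" "f0!(i0-1) = 1"
    and tp: "1 \<le> tp" "tp \<le> k" "f1!(tp-1) = 1"
    and crit: "lam*(gf 0 i0 - ci) + gf 1 tp \<ge> gf 0 i0"
  shows "weak_abelian_periodic w"
proof -
  define Ai where "Ai = gf 0 i0"
  define ti where "ti = gf 1 tp"
  define ns where "ns j = ((\<lambda>n. k*(n-1)+tp)^^j) i0" for j
  have ns0: "ns 0 = i0" and nsS: "ns (Suc j) = k*(ns j - 1) + tp" for j unfolding ns_def by simp_all
  have i02: "i0 \<ge> 2" using i0 f0_0 by (cases "i0 = 1") auto
  have "ns j \<ge> 2 \<and> ns j \<ge> j \<and> w (ns j - 1) = 1 \<and> Gi (ns j) \<ge> Ai" for j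
  proof (induction j)
    case 0
    have "w (i0 - 1) = 1" using wpre[of "i0-1"] i0 by simp
    moreover have "Gi i0 = Ai" using Gi_pre[OF i0(2)] Ai_def by simp
    ultimately show ?case using i02 ns0 by simp
  next
    case (Suc j)
    let ?n = "ns j"
    have n2: "?n \<ge> 2" using Suc by simp
    have w1: "w (?n - 1) = 1" using Suc by simp
    have "k*(?n-1) \<ge> 2*(?n-1)" using k_ge2 by simp
    then have big: "ns (Suc j) \<ge> ?n + 1" using nsS[of j] n2 tp by linarith
    have "ns (Suc j) - 1 = k*(?n-1) + (tp-1)" using nsS[of j] tp by simp
    then have wS: "w (ns (Suc j) - 1) = 1" using wblock[of "tp-1" "?n-1"] tp w1 by (simp add: fx_def)
    have "Gi (ns (Suc j)) = lam * Gi (?n-1) + gf (w (?n-1)) tp" using Gi_block[OF tp(2)] nsS[of j] by simp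
    also have "\<dots> = lam * (Gi ?n - ci) + ti" using Gi_Suc_prev[of ?n] n2 w1 ti_def by (simp add: st_def)
    also have "\<dots> \<ge> lam * (Ai - ci) + ti" using Suc lam2 by (simp add: mult_left_mono)
    finally have "Gi (ns (Suc j)) \<ge> Ai" using crit Ai_def ti_def by simp
    then show ?case using big Suc wS by simp
  qed
  then have P: "ns j \<ge> j" "Gi (ns j) \<ge> Ai" for j by auto
  show ?thesis
  proof (rule cross[of Ai])
    show "\<forall>N. \<exists>n\<ge>N. Ai \<le> Gi n" using P by blast
    show "\<forall>N. \<exists>n\<ge>N. Gi n < Ai" using neg_often2[OF lam2] by blast
  qed
qed

end



lemma graphic_at: "real n \<le> x \<Longrightarrow> x < real n + 1 \<Longrightarrow>
  graphic b c u x = graph_pt b c u n + (x - real n) * (graph_pt b c u (Suc n) - graph_pt b c u n)"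
proof -
  assume a: "real n \<le> x" "x < real n + 1"
  have "\<lfloor>x\<rfloor> = int n" using a by (intro floor_unique) auto
  then show ?thesis by (simp add: graphic_def Let_def)
qed

context fw begin

lemma gr0: "j \<le> k \<Longrightarrow> graph_pt (real (cnt 1 f0)) (real (cnt 0 f1)) f0 j = of_int (gf 0 j)"
  using graph_pt_gf[of j 0] by (simp add: fx_def)
lemma gr1: "j \<le> k \<Longrightarrow> graph_pt (real (cnt 1 f0)) (real (cnt 0 f1)) f1 j = of_int (gf 1 j)"
  using graph_pt_gf[of j 1] by (simp add: fx_def)

lemma part1_pt:
  assumes x: "0 < x" "x \<le> real k" and g: "graphic (real (cnt 1 f0)) (real (cnt 0 f1)) f0 x = 0"
  shows "\<exists>i. 1 \<le> i \<and> i \<le> k \<and> gf 0 i \<ge> 0"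
proof -
  define n where "n = nat \<lfloor>x\<rfloor>"
  have nx: "real n \<le> x" "x < real n + 1" unfolding n_def using x by linarith+
  have nk: "n \<le> k" using nx x by linarith
  define \<theta> where "\<theta> = x - real n"
  have th: "0 \<le> \<theta>" "\<theta> < 1" using nx unfolding \<theta>_def by auto
  have G: "graph_pt (real (cnt 1 f0)) (real (cnt 0 f1)) f0 n + \<theta> * (graph_pt (real (cnt 1 f0)) (real (cnt 0 f1)) f0 (Suc n) - graph_pt (real (cnt 1 f0)) (real (cnt 0 f1)) f0 n) = 0"
    using g graphic_at[OF nx] unfolding \<theta>_def by simp
  show ?thesis
  proof (cases "\<theta> = 0")
    case True
    then have "of_int (gf 0 n) = (0::real)" using G gr0[OF nk] by simp
    moreover have "n \<ge> 1" using True x unfolding \<theta>_def by simp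
    ultimately show ?thesis using nk by (intro exI[of _ n]) simp
  next
    case False
    then have thp: "\<theta> > 0" using th by simp
    have nk2: "Suc n \<le> k" using thp x unfolding \<theta>_def by linarith
    define y0 where "y0 = real_of_int (gf 0 n)"
    define y1 where "y1 = real_of_int (gf 0 (Suc n))"
    have E: "(1 - \<theta>) * y0 + \<theta> * y1 = 0" using G gr0[OF nk] gr0[OF nk2] unfolding y0_def y1_def
      by (simp add: algebra_simps)
    show ?thesis
    proof (cases "y1 \<ge> 0")
      case True
      then show ?thesis using nk2 unfolding y1_def by (intro exI[of _ "Suc n"]) simp
    next
      case False
      then have "\<theta> * y1 < 0" using thp by (simp add: mult_pos_neg)
      then have "(1 - \<theta>) * y0 > 0" using E by linarith
      then have y0p: "y0 > 0" using th by (simp add: zero_less_mult_iff)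
      then have "n \<ge> 1" unfolding y0_def by (cases n) auto
      then show ?thesis using nk y0p unfolding y0_def by (intro exI[of _ n]) simp
    qed
  qed
qed

lemma nozero:
  assumes nz: "\<forall>x::real. 0 < x \<and> x \<le> real k \<longrightarrow> graphic (real (cnt 1 f0)) (real (cnt 0 f1)) f0 x \<noteq> 0"
  shows "1 \<le> j \<Longrightarrow> j \<le> k \<Longrightarrow> gf 0 j \<le> -1"
proof (induction j)
  case 0 then show ?case by simp
next
  case (Suc j)
  show ?case
  proof (cases "j = 0")
    case True
    then show ?thesis using f0_0 b_pos by (simp add: gf_Suc fx_def st_def)
  next
    case False
    then have j1: "1 \<le> j" by simp
    have jk: "j \<le> k" using Suc by simp
    have IH: "gf 0 j \<le> -1" using Suc.IH j1 jk by simp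
    show ?thesis
    proof (rule ccontr)
      assume "\<not> gf 0 (Suc j) \<le> -1"
      then have y1: "gf 0 (Suc j) \<ge> 0" by simp
      define y0 where "y0 = real_of_int (gf 0 j)"
      define y1 where "y1 = real_of_int (gf 0 (Suc j))"
      have y0n: "y0 \<le> -1" using IH unfolding y0_def by simp
      have y1n: "y1 \<ge> 0" using y1 unfolding y1_def by simp
      show False
      proof (cases "y1 = 0")
        case True
        have "graphic (real (cnt 1 f0)) (real (cnt 0 f1)) f0 (real (Suc j)) = graph_pt (real (cnt 1 f0)) (real (cnt 0 f1)) f0 (Suc j)"
          by (rule graphic_nat)
        then have "graphic (real (cnt 1 f0)) (real (cnt 0 f1)) f0 (real (Suc j)) = 0"
          using gr0[OF Suc.prems(2)] True unfolding y1_def by simp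
        moreover have "0 < real (Suc j)" "real (Suc j) \<le> real k" using Suc.prems(2) by auto
        ultimately show False using nz by blast
      next
        case False
        then have y1p: "y1 > 0" using y1n by simp
        define \<theta> where "\<theta> = - y0 / (y1 - y0)"
        have dpos: "y1 - y0 > 0" using y1p y0n by simp
        have th1: "0 < \<theta>" unfolding \<theta>_def using dpos y0n by (intro divide_pos_pos) auto
        have th2: "\<theta> < 1" unfolding \<theta>_def using dpos y0n y1p by (subst divide_less_eq_1_pos[OF dpos]) linarith
        note th = th1 th2
        define x where "x = real j + \<theta>"
        have xb: "real j \<le> x" "x < real j + 1" unfolding x_def using th by auto
        have "graphic (real (cnt 1 f0)) (real (cnt 0 f1)) f0 x = y0 + \<theta> * (y1 - y0)"
          using graphic_at[OF xb] gr0[OF jk] gr0[OF Suc.prems(2)] unfolding x_def y0_def y1_def by simp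
        also have "\<dots> = 0" unfolding \<theta>_def using dpos by (simp add: field_simps)
        finally have "graphic (real (cnt 1 f0)) (real (cnt 0 f1)) f0 x = 0" .
        moreover have "0 < x" "x \<le> real k" using xb j1 jk Suc.prems(2) by auto
        ultimately show False using nz by blast
      qed
    qed
  qed
qed

lemma down1: "j \<le> k \<Longrightarrow> \<exists>j'\<le>j. (j' = 0 \<or> (1 \<le> j' \<and> f1!(j'-1) = 1)) \<and> gf 1 j \<le> gf 1 j'"
proof (induction j)
  case 0 then show ?case by auto
next
  case (Suc j)
  show ?case
  proof (cases "f1 ! j = 1")
    case True then show ?thesis by (intro exI[of _ "Suc j"]) auto
  next
    case False
    then have "gf 1 (Suc j) \<le> gf 1 j" using b_pos by (simp add: gf_Suc fx_def st_def)
    moreover obtain j' where "j' \<le> j" "j' = 0 \<or> (1 \<le> j' \<and> f1!(j'-1) = 1)" "gf 1 j \<le> gf 1 j'"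
      using Suc by auto
    ultimately show ?thesis by (intro exI[of _ j']) auto
  qed
qed

end



theorem theorem1:
  fixes k :: nat and f0 f1 :: "nat list" and w :: "nat \<Rightarrow> nat"
  assumes bin0: "binword f0" and bin1: "binword f1"
    and unif: "uniform_morph k f0 f1"
    and prim: "primitive_morph f0 f1"
    and start: "f0 \<noteq> [] \<and> hd f0 = 0"
    and fix_w: "\<forall>n i. i < length ((morph f0 f1 ^^ n) [0]) \<longrightarrow> w i = (morph f0 f1 ^^ n) [0] ! i"
  defines "b \<equiv> real (cnt 1 f0)"
    and "c \<equiv> real (cnt 0 f1)"
  shows
    "((\<exists>x::real. 0 < x \<and> x \<le> real k \<and> graphic b c f0 x = 0) \<longrightarrow> weak_abelian_periodic w)
   \<and> (graphic b c f0 (real k) \<ge> - b \<longrightarrow> weak_abelian_periodic w)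
   \<and> ((\<forall>x::real. 0 < x \<and> x \<le> real k \<longrightarrow> graphic b c f0 x \<noteq> 0) \<and> graphic b c f0 (real k) < - b \<longrightarrow>
       (let \<Delta> = graphic b c f0 (real k);
            A = Max {graphic b c f0 (real i) | i. 1 \<le> i \<and> i \<le> k \<and> f0 ! (i - 1) = 1};
            t = Max {graphic b c f1 (real i) | i. 1 \<le> i \<and> i \<le> k \<and> f1 ! (i - 1) = 1}
        in weak_abelian_periodic w \<longleftrightarrow> \<Delta> * ((A - c) / - b) + t \<ge> A))"
proof -
  interpret fw k f0 f1 w using bin0 bin1 unif prim start fix_w by (simp add: fw_def)
  have bR: "b = real_of_int bi" unfolding b_def bi_def by simp
  have cR: "c = real_of_int ci" unfolding c_def ci_def by simp
  have gk: "graphic b c f0 (real k) = - real_of_int bi * real_of_int lam"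
    using graphic_nat gr0[of k] gf_k[of 0] unfolding b_def c_def by (simp add: st_def)
  have bp: "real_of_int bi \<ge> 1" using b_pos by simp
  have P1: "(\<exists>x::real. 0 < x \<and> x \<le> real k \<and> graphic b c f0 x = 0) \<longrightarrow> weak_abelian_periodic w"
  proof
    assume "\<exists>x::real. 0 < x \<and> x \<le> real k \<and> graphic b c f0 x = 0"
    then obtain i where i: "1 \<le> i" "i \<le> k" "gf 0 i \<ge> 0" using part1_pt unfolding b_def c_def by blast
    show "weak_abelian_periodic w"
    proof (cases "lam \<ge> 1")
      case True then show ?thesis using lampos_wap[OF True i(1)] Gi_pre[OF i(2)] i by simp
    next
      case False
      then show ?thesis using lam0_wap lamneg_wap by (cases "lam = 0") auto
    qed
  qed
  have P2: "graphic b c f0 (real k) \<ge> - b \<longrightarrow> weak_abelian_periodic w"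
  proof
    assume "graphic b c f0 (real k) \<ge> - b"
    then have "real_of_int bi * real_of_int lam \<le> real_of_int bi * 1" using gk bR by simp
    then have "lam \<le> 1" using bp by (simp add: mult_le_cancel_left_pos)
    then show "weak_abelian_periodic w"
      using lam0_wap lam1_wap lamneg_wap by (cases "lam < 0"; cases "lam = 0") auto
  qed
  have P3: "(\<forall>x::real. 0 < x \<and> x \<le> real k \<longrightarrow> graphic b c f0 x \<noteq> 0) \<and> graphic b c f0 (real k) < - b \<longrightarrow>
       (let \<Delta> = graphic b c f0 (real k);
            A = Max {graphic b c f0 (real i) | i. 1 \<le> i \<and> i \<le> k \<and> f0 ! (i - 1) = 1};
            t = Max {graphic b c f1 (real i) | i. 1 \<le> i \<and> i \<le> k \<and> f1 ! (i - 1) = 1}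
        in weak_abelian_periodic w \<longleftrightarrow> \<Delta> * ((A - c) / - b) + t \<ge> A)"
  proof
    assume H: "(\<forall>x::real. 0 < x \<and> x \<le> real k \<longrightarrow> graphic b c f0 x \<noteq> 0) \<and> graphic b c f0 (real k) < - b"
    have nz: "\<forall>x::real. 0 < x \<and> x \<le> real k \<longrightarrow> graphic (real (cnt 1 f0)) (real (cnt 0 f1)) f0 x \<noteq> 0"
      using H unfolding b_def c_def by blast
    have "real_of_int bi * 1 < real_of_int bi * real_of_int lam" using H gk bR by simp
    then have "1 < lam" using bp by (simp add: mult_less_cancel_left_pos)
    then have lam2: "lam \<ge> 2" by simp
    have g0neg: "\<And>j. 1 \<le> j \<Longrightarrow> j \<le> k \<Longrightarrow> gf 0 j \<le> -1" using nozero[OF nz] by blast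
    define SA where "SA = {graphic b c f0 (real i) | i. 1 \<le> i \<and> i \<le> k \<and> f0 ! (i - 1) = 1}"
    define ST where "ST = {graphic b c f1 (real i) | i. 1 \<le> i \<and> i \<le> k \<and> f1 ! (i - 1) = 1}"
    define IA where "IA = {i. 1 \<le> i \<and> i \<le> k \<and> f0 ! (i - 1) = 1}"
    define IT where "IT = {i. 1 \<le> i \<and> i \<le> k \<and> f1 ! (i - 1) = 1}"
    have gA: "\<And>i. i \<le> k \<Longrightarrow> graphic b c f0 (real i) = real_of_int (gf 0 i)"
      using graphic_nat gr0 unfolding b_def c_def by simp
    have gT: "\<And>i. i \<le> k \<Longrightarrow> graphic b c f1 (real i) = real_of_int (gf 1 i)"
      using graphic_nat gr1 unfolding b_def c_def by simp
    have SAe: "SA = (\<lambda>i. real_of_int (gf 0 i)) ` IA"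
    proof (rule set_eqI, rule iffI)
      fix y assume "y \<in> SA"
      then obtain i where "y = graphic b c f0 (real i)" "i \<in> IA" unfolding SA_def IA_def by blast
      then show "y \<in> (\<lambda>i. real_of_int (gf 0 i)) ` IA" using gA unfolding IA_def by auto
    next
      fix y assume "y \<in> (\<lambda>i. real_of_int (gf 0 i)) ` IA"
      then obtain i where "y = real_of_int (gf 0 i)" "i \<in> IA" by blast
      then have "y = graphic b c f0 (real i)" "i \<in> IA" using gA unfolding IA_def by auto
      then show "y \<in> SA" unfolding SA_def IA_def by blast
    qed
    have STe: "ST = (\<lambda>i. real_of_int (gf 1 i)) ` IT"
    proof (rule set_eqI, rule iffI)
      fix y assume "y \<in> ST"
      then obtain i where "y = graphic b c f1 (real i)" "i \<in> IT" unfolding ST_def IT_def by blast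
      then show "y \<in> (\<lambda>i. real_of_int (gf 1 i)) ` IT" using gT unfolding IT_def by auto
    next
      fix y assume "y \<in> (\<lambda>i. real_of_int (gf 1 i)) ` IT"
      then obtain i where "y = real_of_int (gf 1 i)" "i \<in> IT" by blast
      then have "y = graphic b c f1 (real i)" "i \<in> IT" using gT unfolding IT_def by auto
      then show "y \<in> ST" unfolding ST_def IT_def by blast
    qed
    have finA: "finite SA" unfolding SAe IA_def by (rule finite_imageI) (rule finite_subset[of _ "{..k}"], auto)
    have finT: "finite ST" unfolding STe IT_def by (rule finite_imageI) (rule finite_subset[of _ "{..k}"], auto)
    have neA: "IA \<noteq> {}"
    proof -
      have "1 \<in> set f0" using b_pos unfolding bi_def cnt_def
        by (metis (mono_tags, lifting) filter_False int_ops(1) length_0_conv not_one_le_zero)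
      then obtain idx where "idx < length f0" "f0 ! idx = 1" by (auto simp: in_set_conv_nth)
      then have "Suc idx \<in> IA" unfolding IA_def using len0 by simp
      then show ?thesis by blast
    qed
    have neT: "IT \<noteq> {}"
    proof -
      have "1 \<in> set f1"
      proof (rule ccontr)
        assume "1 \<notin> set f1"
        then have "cnt 1 f1 = 0" unfolding cnt_def by (auto simp add: filter_empty_conv)
        then have "cnt 0 f1 = k" using cnt_f1 by simp
        then show False using lam2 lam_def cnt_f0 by simp
      qed
      then obtain idx where "idx < length f1" "f1 ! idx = 1" by (auto simp: in_set_conv_nth)
      then have "Suc idx \<in> IT" unfolding IT_def using len1 by simp
      then show ?thesis by blast
    qed
    obtain i0 where i0: "i0 \<in> IA" "Max SA = real_of_int (gf 0 i0)"
      using Max_in[OF finA] neA unfolding SAe by auto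
    obtain tp where tp: "tp \<in> IT" "Max ST = real_of_int (gf 1 tp)"
      using Max_in[OF finT] neT unfolding STe by auto
    define Ai where "Ai = gf 0 i0"
    define ti where "ti = gf 1 tp"
    have g0A: "\<And>j. 1 \<le> j \<Longrightarrow> j \<le> k \<Longrightarrow> f0!(j-1) = 1 \<Longrightarrow> gf 0 j \<le> Ai"
    proof -
      fix j assume "1 \<le> j" "j \<le> k" "f0!(j-1) = 1"
      then have "real_of_int (gf 0 j) \<in> SA" unfolding SAe IA_def by auto
      then have "real_of_int (gf 0 j) \<le> Max SA" using finA by (rule Max_ge[rotated])
      then show "gf 0 j \<le> Ai" using i0 Ai_def by simp
    qed
    have g1T: "\<And>j. j \<in> IT \<Longrightarrow> gf 1 j \<le> ti"
    proof -
      fix j assume "j \<in> IT"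
      then have "real_of_int (gf 1 j) \<in> ST" unfolding STe by auto
      then have "real_of_int (gf 1 j) \<le> Max ST" using finT by (rule Max_ge[rotated])
      then show "gf 1 j \<le> ti" using tp ti_def by simp
    qed
    have Aneg: "Ai \<le> -1" using g0neg i0 unfolding Ai_def IA_def by auto
    have gf1k: "gf 1 k \<ge> 2"
    proof -
      have "gf 1 k = lam * ci" using gf_k[of 1] by (simp add: st_def)
      also have "\<dots> \<ge> 2 * 1" using lam2 c_pos by (intro mult_mono) auto
      finally show ?thesis by simp
    qed
    have tnn: "ti \<ge> 0"
    proof -
      obtain j' where j': "j' \<le> k" "j' = 0 \<or> (1 \<le> j' \<and> f1!(j'-1) = 1)" "gf 1 k \<le> gf 1 j'"
        using down1[of k] by auto
      show ?thesis
      proof (cases "j' = 0")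
        case True then show ?thesis using j' gf1k by simp
      next
        case False
        then have "j' \<in> IT" using j' unfolding IT_def by auto
        then show ?thesis using g1T j' gf1k by fastforce
      qed
    qed
    have g1t: "\<And>j. j \<le> k \<Longrightarrow> gf 1 j \<le> ti"
    proof -
      fix j assume jk: "j \<le> k"
      obtain j' where j': "j' \<le> j" "j' = 0 \<or> (1 \<le> j' \<and> f1!(j'-1) = 1)" "gf 1 j \<le> gf 1 j'"
        using down1[OF jk] by auto
      show "gf 1 j \<le> ti"
      proof (cases "j' = 0")
        case True then show ?thesis using j' tnn by simp
      next
        case False
        then have "j' \<in> IT" using j' jk unfolding IT_def by auto
        then show ?thesis using g1T j' by fastforce
      qed
    qed
    have crit_iff: "graphic b c f0 (real k) * ((Max SA - c) / - b) + Max ST \<ge> Max SA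
                    \<longleftrightarrow> lam*(Ai - ci) + ti \<ge> Ai"
    proof -
      have "graphic b c f0 (real k) * ((Max SA - c) / - b) = real_of_int lam * (real_of_int Ai - real_of_int ci)"
        using gk bR cR i0 Ai_def bp by (simp add: field_simps)
      then have "graphic b c f0 (real k) * ((Max SA - c) / - b) + Max ST = real_of_int (lam*(Ai - ci) + ti)"
        using tp ti_def by simp
      then show ?thesis using i0 Ai_def by (simp only: of_int_le_iff)
    qed
    have "weak_abelian_periodic w \<longleftrightarrow> lam*(Ai - ci) + ti \<ge> Ai"
    proof
      assume wap: "weak_abelian_periodic w"
      show "lam*(Ai - ci) + ti \<ge> Ai"
      proof (rule ccontr)
        assume "\<not> lam*(Ai - ci) + ti \<ge> Ai"
        then have nc: "lam*(Ai - ci) + ti < Ai" by simp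
        have "\<forall>L. \<exists>N. \<forall>n\<ge>N. Gi n < L" by (rule div_inf[OF lam2 g0neg g0A Aneg g1t nc])
        then show False using notwap[OF lam2] wap by blast
      qed
    next
      assume "lam*(Ai - ci) + ti \<ge> Ai"
      then show "weak_abelian_periodic w"
        using crit_wap[OF lam2, of i0 tp] i0 tp unfolding IA_def IT_def Ai_def ti_def by auto
    qed
    then show "let \<Delta> = graphic b c f0 (real k);
            A = Max {graphic b c f0 (real i) | i. 1 \<le> i \<and> i \<le> k \<and> f0 ! (i - 1) = 1};
            t = Max {graphic b c f1 (real i) | i. 1 \<le> i \<and> i \<le> k \<and> f1 ! (i - 1) = 1}
        in weak_abelian_periodic w \<longleftrightarrow> \<Delta> * ((A - c) / - b) + t \<ge> A"
      unfolding Let_def SA_def[symmetric] ST_def[symmetric] using crit_iff by simp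
  qed
  show ?thesis using P1 P2 P3 by blast
qed


end
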